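(* Let $m,n,s,k,c$ be positive integers with $s$ or $k$ odd, and let $\Gamma$ be an abelian group of order $nkc$ having exactly one involution. Then there is no $\mathrm{MRS}_\Gamma(m,n;s,k;c)$.
   Context: For positive integers $m,n,s,k,c$ and an abelian group $\Gamma$ of order $nkc$, an $\mathrm{MRS}_\Gamma(m,n;s,k;c)$ is a set of $c$ partially filled $m\times n$ arrays (some cells may be empty) with entries in $\Gamma$ such that: every element of $\Gamma$ appears exactly once and in a unique array; in every array each row contains exactly $s$ filled cells and each column contains exactly $k$ filled cells; and there exist $\omega,\delta\in\Gamma$ such that in every array the sum of the entries of each row is $\omega$ and the sum of the entries of each column is $\delta$. An involution is an element of order $2$. *)

theory Defs
  imports Main "HOL-Library.Cardinality"
begin

text \<open>The c arrays are encoded by A :: nat => nat => nat => 'a option: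
  A t i j is the content of cell (i,j) of array t (t < c, i < m, j < n);
  None means the cell is empty. Values of A outside these ranges are irrelevant.\<close>

definition entry :: "'a::ab_group_add option \<Rightarrow> 'a" where
  "entry x = (case x of None \<Rightarrow> 0 | Some g \<Rightarrow> g)"

definition MRS :: "nat \<Rightarrow> nat \<Rightarrow> nat \<Rightarrow> nat \<Rightarrow> nat \<Rightarrow>
    (nat \<Rightarrow> nat \<Rightarrow> nat \<Rightarrow> 'a::{ab_group_add,finite} option) \<Rightarrow> bool" where
  "MRS m n s k c A \<longleftrightarrow>
     CARD('a) = n * k * c \<and>
     (\<forall>g::'a. \<exists>!p. (case p of (t, i, j) \<Rightarrow> t < c \<and> i < m \<and> j < n \<and> A t i j = Some g)) \<and>
     (\<forall>t<c. \<forall>i<m. card {j. j < n \<and> A t i j \<noteq> None} = s) \<and>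
     (\<forall>t<c. \<forall>j<n. card {i. i < m \<and> A t i j \<noteq> None} = k) \<and>
     (\<exists>\<omega> \<delta>. (\<forall>t<c. \<forall>i<m. (\<Sum>j<n. entry (A t i j)) = \<omega>) \<and>
             (\<forall>t<c. \<forall>j<n. (\<Sum>i<m. entry (A t i j)) = \<delta>))"

definition involution :: "'a::ab_group_add \<Rightarrow> bool" where
  "involution x \<longleftrightarrow> x \<noteq> 0 \<and> x + x = 0"

end

theory Submission
  imports Defs
begin


fun ms :: "nat \<Rightarrow> 'a::ab_group_add \<Rightarrow> 'a" where
  "ms 0 g = 0"
| "ms (Suc n) g = g + ms n g"

lemma ms_add: "ms (a + b) g = ms a g + ms b g"
  by (induction a) (auto simp: add.assoc)

lemma ms_mult: "ms (a * b) g = ms a (ms b g)"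
  by (induction a) (auto simp: ms_add)

lemma ms_zero: "ms n 0 = 0"
  by (induction n) auto

lemma ms_sum: "finite A \<Longrightarrow> (\<Sum>x\<in>A. g) = ms (card A) g"
  by (induction A rule: finite_induct) auto

lemma ms_odd:
  assumes "x + x = (0::'a::ab_group_add)" "odd n" shows "ms n x = x"
proof -
  obtain q where q: "n = Suc (2 * q)" using assms(2) by (metis oddE Suc_eq_plus1)
  have "ms 2 x = 0" using assms(1) by (simp add: numeral_2_eq_2)
  then have "ms (q * 2) x = 0" by (simp add: ms_mult ms_zero)
  then show ?thesis using q by (simp add: mult.commute)
qed

lemma ms_card:
  fixes g :: "'a::{ab_group_add,finite}"
  shows "ms CARD('a) g = 0"
proof -
  have "(\<Sum>x\<in>UNIV. x + g) = (\<Sum>x\<in>UNIV. x)"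
  proof -
    have "bij_betw (\<lambda>x. x + g) UNIV UNIV"
      unfolding bij_betw_def inj_on_def by (auto simp: image_iff intro!: exI[of _ "x - g" for x])
    then show ?thesis using sum.reindex_bij_betw[of "\<lambda>x. x + g" UNIV UNIV "\<lambda>x. x"] by simp
  qed
  then have "(\<Sum>x\<in>UNIV. x) + (\<Sum>x\<in>(UNIV::'a set). g) = (\<Sum>x\<in>UNIV. x)"
    by (simp add: sum.distrib)
  then show ?thesis by (simp add: ms_sum)
qed

lemma pair_sum:
  fixes R :: "'a::ab_group_add set"
  assumes "finite R" "\<forall>x\<in>R. - x \<in> R \<and> x \<noteq> - x"
  shows "sum (\<lambda>x. x) R = 0"
  using assms
proof (induction "card R" arbitrary: R rule: less_induct)
  case less
  show ?case
  proof (cases "R = {}")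
    case True then show ?thesis by simp
  next
    case False
    then obtain x where x: "x \<in> R" by blast
    define R' where "R' = R - {x, -x}"
    have xm: "-x \<in> R" "x \<noteq> -x" using less.prems x by auto
    have sub: "{x, -x} \<subseteq> R" using x xm by auto
    have "R' \<subset> R" using x unfolding R'_def by auto
    then have "card R' < card R" by (rule psubset_card_mono[OF less.prems(1)])
    moreover have "finite R'" using less.prems(1) R'_def by simp
    moreover have "\<forall>y\<in>R'. - y \<in> R' \<and> y \<noteq> - y" using less.prems(2) unfolding R'_def
      by (auto simp: minus_equation_iff)
    ultimately have s': "sum (\<lambda>x. x) R' = 0" using less.hyps by blast
    have "sum (\<lambda>x. x) R = sum (\<lambda>x. x) R' + sum (\<lambda>x. x) {x, -x}"
      unfolding R'_def by (rule sum.subset_diff[OF sub less.prems(1)])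
    also have "\<dots> = 0" using s' xm by simp
    finally show ?thesis .
  qed
qed

lemma sum_all:
  fixes \<iota> :: "'a::{ab_group_add,finite}"
  assumes "involution \<iota>" "\<And>x. involution x \<Longrightarrow> x = \<iota>"
  shows "(\<Sum>x\<in>UNIV. x) = \<iota>"
proof -
  have i0: "\<iota> \<noteq> 0" using assms(1) by (simp add: involution_def)
  have "(\<Sum>x\<in>UNIV. x) = sum (\<lambda>x. x) {0, \<iota>} + sum (\<lambda>x. x) (UNIV - {0, \<iota>})"
    by (metis Diff_partition finite subset_UNIV sum.union_disjoint Diff_disjoint finite_Diff)
  moreover have "sum (\<lambda>x. x) (UNIV - {0, \<iota>}) = 0"
  proof -
    have "\<forall>x\<in>UNIV - {0, \<iota>}. - x \<in> UNIV - {0, \<iota>} \<and> x \<noteq> - x"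
    proof
      fix x assume x: "x \<in> UNIV - {0, \<iota>}"
      have ne: "x \<noteq> - x"
      proof
        assume "x = - x"
        then have "x + x = 0" by (metis add.right_inverse)
        then have "involution x" using x by (simp add: involution_def)
        then show False using assms(2) x by auto
      qed
      have "-\<iota> = \<iota>" using assms(1) unfolding involution_def by (metis add_eq_0_iff)
      then have "-x \<noteq> \<iota>" using x by (metis minus_minus DiffE insertCI)
      then show "- x \<in> UNIV - {0, \<iota>} \<and> x \<noteq> - x" using x ne by auto
    qed
    then show ?thesis by (intro pair_sum) auto
  qed
  ultimately show ?thesis using i0 by simp
qed

lemma ex1_eq: "\<exists>!x. Q x \<Longrightarrow> Q a \<Longrightarrow> Q b \<Longrightarrow> a = b"
  by blast

theorem corollary3p7:
  fixes m n s k c :: nat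
  assumes "m > 0" "n > 0" "s > 0" "k > 0" "c > 0"
    and "odd s \<or> odd k"
    and "CARD('a::{ab_group_add,finite}) = n * k * c"
    and "\<exists>!x::'a. involution x"
  shows "\<not> (\<exists>A :: nat \<Rightarrow> nat \<Rightarrow> nat \<Rightarrow> 'a option. MRS m n s k c A)"
proof
  assume "\<exists>A :: nat \<Rightarrow> nat \<Rightarrow> nat \<Rightarrow> 'a option. MRS m n s k c A"
  then obtain A :: "nat \<Rightarrow> nat \<Rightarrow> nat \<Rightarrow> 'a option" where M: "MRS m n s k c A" by blast
  obtain \<iota> :: 'a where iota: "involution \<iota>" "\<And>x. involution x \<Longrightarrow> x = \<iota>" using assms(8) by blast
  have i0: "\<iota> \<noteq> 0" "\<iota> + \<iota> = 0" using iota(1) by (auto simp: involution_def)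
  note Mu = M[unfolded MRS_def]
  have uniq: "\<forall>g::'a. \<exists>!p. (case p of (t, i, j) \<Rightarrow> t < c \<and> i < m \<and> j < n \<and> A t i j = Some g)"
    using Mu by (rule conjunct1[OF conjunct2])
  have rows: "\<forall>t<c. \<forall>i<m. card {j. j < n \<and> A t i j \<noteq> None} = s"
    using Mu by (rule conjunct1[OF conjunct2[OF conjunct2]])
  obtain \<omega> \<delta> where om: "\<forall>t<c. \<forall>i<m. (\<Sum>j<n. entry (A t i j)) = \<omega>"
    and de: "\<forall>t<c. \<forall>j<n. (\<Sum>i<m. entry (A t i j)) = \<delta>"
    using Mu[THEN conjunct2, THEN conjunct2, THEN conjunct2, THEN conjunct2] by blast
  define P where "P = (SIGMA t:{..<c}. SIGMA i:{..<m}. {j. j < n \<and> A t i j \<noteq> None})"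
  define h where "h = (\<lambda>(t::nat, i::nat, j::nat). the (A t i j))"
  have bij: "bij_betw h P UNIV"
  proof (rule bij_betw_imageI)
    show "inj_on h P"
    proof (rule inj_onI)
      fix p q assume p: "p \<in> P" and q: "q \<in> P" and e: "h p = h q"
      obtain t i j where pp: "p = (t, i, j)" by (cases p) auto
      obtain t' i' j' where qq: "q = (t', i', j')" by (cases q) auto
      let ?g = "h p"
      have 1: "t < c \<and> i < m \<and> j < n \<and> A t i j = Some ?g" using p pp unfolding P_def h_def by auto
      have 2: "t' < c \<and> i' < m \<and> j' < n \<and> A t' i' j' = Some ?g" using q qq e unfolding P_def h_def by auto
      have "\<exists>!p. (case p of (t, i, j) \<Rightarrow> t < c \<and> i < m \<and> j < n \<and> A t i j = Some ?g)"
        using uniq by (rule spec)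
      moreover have "(case (t, i, j) of (t, i, j) \<Rightarrow> t < c \<and> i < m \<and> j < n \<and> A t i j = Some ?g)"
        using 1 by simp
      moreover have "(case (t', i', j') of (t, i, j) \<Rightarrow> t < c \<and> i < m \<and> j < n \<and> A t i j = Some ?g)"
        using 2 by simp
      ultimately have "(t, i, j) = (t', i', j')" by (rule ex1_eq)
      then show "p = q" using pp qq by simp
    qed
    show "h ` P = UNIV"
    proof (rule set_eqI, rule iffI)
      fix g :: 'a assume "g \<in> UNIV"
      have "\<exists>!p. (case p of (t, i, j) \<Rightarrow> t < c \<and> i < m \<and> j < n \<and> A t i j = Some g)"
        using uniq by (rule spec)
      then obtain p where "case p of (t, i, j) \<Rightarrow> t < c \<and> i < m \<and> j < n \<and> A t i j = Some g"
        by (rule ex1E)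
      then obtain t i j where "t < c" "i < m" "j < n" "A t i j = Some g" by auto
      then have "(t, i, j) \<in> P" "h (t, i, j) = g" unfolding P_def h_def by auto
      then show "g \<in> h ` P" by force
    qed auto
  qed
  have finP: "finite P" unfolding P_def by auto
  have cardP: "card P = CARD('a)" using bij_betw_same_card[OF bij] by simp
  have cardP2: "card P = c * m * s"
  proof -
    have "card P = (\<Sum>t<c. \<Sum>i<m. card {j. j < n \<and> A t i j \<noteq> None})"
      unfolding P_def by (simp add: card_SigmaI)
    also have "\<dots> = (\<Sum>t<c. \<Sum>i<m. s)" using rows by simp
    finally show ?thesis by simp
  qed
  define f where "f t i j = entry (A t i j)" for t i j
  have T1: "(\<Sum>x\<in>UNIV. x) = (\<Sum>t<c. \<Sum>i<m. \<Sum>j<n. f t i j)"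
  proof -
    have "(\<Sum>x\<in>UNIV. x) = sum h P"
      using sum.reindex_bij_betw[OF bij, of "\<lambda>x. x"] by simp
    also have "\<dots> = sum (\<lambda>(t, i, j). f t i j) P"
      by (rule sum.cong) (auto simp: P_def h_def f_def entry_def split: option.splits)
    also have "\<dots> = (\<Sum>t<c. \<Sum>i<m. \<Sum>j\<in>{j. j < n \<and> A t i j \<noteq> None}. f t i j)"
      unfolding P_def by (simp add: sum.Sigma[symmetric])
    also have "\<dots> = (\<Sum>t<c. \<Sum>i<m. \<Sum>j<n. f t i j)"
    proof -
      have inner: "(\<Sum>j\<in>{j. j < n \<and> A t i j \<noteq> None}. f t i j) = (\<Sum>j<n. f t i j)" for t i
        by (rule sum.mono_neutral_left) (auto simp: f_def entry_def)
      show ?thesis by (simp only: inner)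
    qed
    finally show ?thesis .
  qed
  have S: "(\<Sum>x\<in>UNIV. x) = \<iota>" using sum_all iota by blast
  show False
    using assms(6)
  proof
    assume so: "odd s"
    have "(\<Sum>t<c. \<Sum>i<m. \<Sum>j<n. f t i j) = (\<Sum>t<c. \<Sum>i<m. \<omega>)"
      using om by (simp add: f_def)
    also have "\<dots> = ms (c * m) \<omega>" by (simp add: ms_sum ms_mult)
    finally have "ms (c * m) \<omega> = \<iota>" using T1 S by simp
    moreover have "ms (s * (c * m)) \<omega> = 0" using ms_card[of \<omega>] cardP cardP2
      by (metis mult.commute)
    ultimately have "ms s \<iota> = 0" by (simp add: ms_mult)
    then show False using ms_odd[OF i0(2) so] i0(1) by simp
  next
    assume ko: "odd k"
    have "(\<Sum>t<c. \<Sum>i<m. \<Sum>j<n. f t i j) = (\<Sum>t<c. \<Sum>j<n. \<Sum>i<m. f t i j)"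
      by (simp add: sum.swap[of _ "{..<m}"])
    also have "\<dots> = (\<Sum>t<c. \<Sum>j<n. \<delta>)"
      using de by (simp add: f_def)
    also have "\<dots> = ms (c * n) \<delta>" by (simp add: ms_sum ms_mult)
    finally have "ms (c * n) \<delta> = \<iota>" using T1 S by simp
    moreover have "ms (k * (c * n)) \<delta> = 0" using ms_card[of \<delta>] assms(7)
      by (metis mult.commute mult.assoc)
    ultimately have "ms k \<iota> = 0" by (simp add: ms_mult)
    then show False using ms_odd[OF i0(2) ko] i0(1) by simp
  qed
qed

end
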